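(* For any unital associative algebra $\mathcal{A}$, its $*$-double $\mathcal{D}(\mathcal{A})$ contains no non-scalar unitary, no non-scalar projection and no non-scalar partial isometry (i.e. every such element is a scalar multiple of the unit).
   Context: All algebras are complex and unital. For a unital associative algebra $\mathcal{A}$, $\mathcal{A}^*$ is an associative algebra with an additive, conjugate-linear, anti-multiplicative bijection $\phi:\mathcal{A}\to\mathcal{A}^*$. The $*$-double $\mathcal{D}(\mathcal{A})$ is the unital free product $\mathcal{A}*\mathcal{A}^*$ of associative algebras with involution determined by $a^*=\phi(a)$ for $a\in\mathcal{A}$ and $b^*=\phi^{-1}(b)$ for $b\in\mathcal{A}^*$. In a $*$-algebra with unit $e$: $u$ is unitary if $u^*u=uu^*=e$; $p$ is a projection if $p=p^*=p^2$; $v$ is a partial isometry if $v^*v$ is a projection. *)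

theory Defs
  imports Complex_Main
begin

text \<open>A unital associative complex algebra: a type with ring structure and a unit
(classes ring, monoid_mult; 0 = 1 is allowed), together with an explicit complex
scalar multiplication making it a complex vector space, bilinear w.r.t. the product.\<close>

definition cplx_alg :: "(complex \<Rightarrow> 'a::{ring,monoid_mult} \<Rightarrow> 'a) \<Rightarrow> bool" where
  "cplx_alg s \<longleftrightarrow>
     (\<forall>c x y. s c (x + y) = s c x + s c y) \<and>
     (\<forall>c d x. s (c + d) x = s c x + s d x) \<and>
     (\<forall>c d x. s (c * d) x = s c (s d x)) \<and>
     (\<forall>x. s 1 x = x) \<and>
     (\<forall>c x y. s c (x * y) = s c x * y) \<and>
     (\<forall>c x y. s c (x * y) = x * s c y)"

datatype ('a, 'b) fterm =
    GenA 'a | GenB 'b | One | Zero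
  | Add "('a, 'b) fterm" "('a, 'b) fterm"
  | Mul "('a, 'b) fterm" "('a, 'b) fterm"
  | Smul complex "('a, 'b) fterm"

text \<open>The congruence whose quotient is the unital free product A * B of unital associative
complex algebras: the axioms of a unital associative complex algebra, together with the
requirement that both generator inclusions are unital algebra homomorphisms.\<close>

inductive fcong :: "(complex \<Rightarrow> 'a::{ring,monoid_mult} \<Rightarrow> 'a) \<Rightarrow> (complex \<Rightarrow> 'b::{ring,monoid_mult} \<Rightarrow> 'b)
    \<Rightarrow> ('a, 'b) fterm \<Rightarrow> ('a, 'b) fterm \<Rightarrow> bool"
  for sA sB where
  refl: "fcong sA sB x x"
| sym: "fcong sA sB x y \<Longrightarrow> fcong sA sB y x"
| trans: "fcong sA sB x y \<Longrightarrow> fcong sA sB y z \<Longrightarrow> fcong sA sB x z"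
| cong_add: "fcong sA sB x x' \<Longrightarrow> fcong sA sB y y' \<Longrightarrow> fcong sA sB (Add x y) (Add x' y')"
| cong_mul: "fcong sA sB x x' \<Longrightarrow> fcong sA sB y y' \<Longrightarrow> fcong sA sB (Mul x y) (Mul x' y')"
| cong_smul: "fcong sA sB x x' \<Longrightarrow> fcong sA sB (Smul c x) (Smul c x')"
| add_assoc: "fcong sA sB (Add (Add x y) z) (Add x (Add y z))"
| add_comm: "fcong sA sB (Add x y) (Add y x)"
| add_zero: "fcong sA sB (Add Zero x) x"
| add_neg: "fcong sA sB (Add x (Smul (-1) x)) Zero"
| smul_add: "fcong sA sB (Smul c (Add x y)) (Add (Smul c x) (Smul c y))"
| add_smul: "fcong sA sB (Smul (c + d) x) (Add (Smul c x) (Smul d x))"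
| smul_smul: "fcong sA sB (Smul (c * d) x) (Smul c (Smul d x))"
| smul_one: "fcong sA sB (Smul 1 x) x"
| mul_assoc: "fcong sA sB (Mul (Mul x y) z) (Mul x (Mul y z))"
| one_mul: "fcong sA sB (Mul One x) x"
| mul_one: "fcong sA sB (Mul x One) x"
| distrib_left: "fcong sA sB (Mul x (Add y z)) (Add (Mul x y) (Mul x z))"
| distrib_right: "fcong sA sB (Mul (Add x y) z) (Add (Mul x z) (Mul y z))"
| smul_mul_left: "fcong sA sB (Mul (Smul c x) y) (Smul c (Mul x y))"
| smul_mul_right: "fcong sA sB (Mul x (Smul c y)) (Smul c (Mul x y))"
| genA_add: "fcong sA sB (GenA (a + a')) (Add (GenA a) (GenA a'))"
| genA_smul: "fcong sA sB (GenA (sA c a)) (Smul c (GenA a))"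
| genA_mul: "fcong sA sB (GenA (a * a')) (Mul (GenA a) (GenA a'))"
| genA_one: "fcong sA sB (GenA 1) One"
| genB_add: "fcong sA sB (GenB (b + b')) (Add (GenB b) (GenB b'))"
| genB_smul: "fcong sA sB (GenB (sB c b)) (Smul c (GenB b))"
| genB_mul: "fcong sA sB (GenB (b * b')) (Mul (GenB b) (GenB b'))"
| genB_one: "fcong sA sB (GenB 1) One"

primrec dstar :: "('a \<Rightarrow> 'b) \<Rightarrow> ('a, 'b) fterm \<Rightarrow> ('a, 'b) fterm" where
  "dstar \<phi> (GenA a) = GenB (\<phi> a)"
| "dstar \<phi> (GenB b) = GenA (inv \<phi> b)"
| "dstar \<phi> One = One"
| "dstar \<phi> Zero = Zero"
| "dstar \<phi> (Add x y) = Add (dstar \<phi> x) (dstar \<phi> y)"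
| "dstar \<phi> (Mul x y) = Mul (dstar \<phi> y) (dstar \<phi> x)"
| "dstar \<phi> (Smul c x) = Smul (cnj c) (dstar \<phi> x)"

definition anti_iso :: "(complex \<Rightarrow> 'a::{ring,monoid_mult} \<Rightarrow> 'a) \<Rightarrow> (complex \<Rightarrow> 'b::{ring,monoid_mult} \<Rightarrow> 'b)
    \<Rightarrow> ('a \<Rightarrow> 'b) \<Rightarrow> bool" where
  "anti_iso sA sB \<phi> \<longleftrightarrow> bij \<phi> \<and>
     (\<forall>x y. \<phi> (x + y) = \<phi> x + \<phi> y) \<and>
     (\<forall>c x. \<phi> (sA c x) = sB (cnj c) (\<phi> x)) \<and>
     (\<forall>x y. \<phi> (x * y) = \<phi> y * \<phi> x)"

text \<open>Notions in the *-double D(A), phrased on representatives (all respect fcong).\<close>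

definition d_unitary where
  "d_unitary sA sB \<phi> u \<longleftrightarrow> fcong sA sB (Mul (dstar \<phi> u) u) One \<and> fcong sA sB (Mul u (dstar \<phi> u)) One"

definition d_projection where
  "d_projection sA sB \<phi> p \<longleftrightarrow> fcong sA sB (dstar \<phi> p) p \<and> fcong sA sB (Mul p p) p"

definition d_partial_isometry where
  "d_partial_isometry sA sB \<phi> v \<longleftrightarrow> d_projection sA sB \<phi> (Mul (dstar \<phi> v) v)"

definition d_scalar where
  "d_scalar sA sB x \<longleftrightarrow> (\<exists>c. fcong sA sB x (Smul c One))"

end

theory Submission
  imports Defs
begin


locale fpb = fixes sA :: "complex \<Rightarrow> 'a::{ring,monoid_mult} \<Rightarrow> 'a" and sB :: "complex \<Rightarrow> 'b::{ring,monoid_mult} \<Rightarrow> 'b"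
begin

abbreviation fc (infix "\<approx>" 50) where "x \<approx> y \<equiv> fcong sA sB x y"

lemma fc_refl[simp,intro]: "x \<approx> x" by (rule fcong.refl)
lemma fc_sym: "x \<approx> y \<Longrightarrow> y \<approx> x" by (rule fcong.sym)
lemma fc_trans[trans]: "x \<approx> y \<Longrightarrow> y \<approx> z \<Longrightarrow> x \<approx> z" by (rule fcong.trans)
lemma fc_add: "x \<approx> x' \<Longrightarrow> y \<approx> y' \<Longrightarrow> Add x y \<approx> Add x' y'" by (rule fcong.cong_add)
lemma fc_mul: "x \<approx> x' \<Longrightarrow> y \<approx> y' \<Longrightarrow> Mul x y \<approx> Mul x' y'" by (rule fcong.cong_mul)
lemma fc_smul: "x \<approx> x' \<Longrightarrow> Smul c x \<approx> Smul c x'" by (rule fcong.cong_smul)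

lemma smul_zero_l: "Smul 0 x \<approx> Zero"
proof -
  let ?s = "Smul 0 x"
  have 1: "?s \<approx> Add ?s ?s" using fcong.add_smul[of sA sB 0 0 x] by simp
  have "Zero \<approx> Add ?s (Smul (-1) ?s)" by (rule fc_sym, rule fcong.add_neg)
  also have "Add ?s (Smul (-1) ?s) \<approx> Add (Add ?s ?s) (Smul (-1) ?s)"
    by (intro fc_add 1 fc_refl)
  also have "\<dots> \<approx> Add ?s (Add ?s (Smul (-1) ?s))" by (rule fcong.add_assoc)
  also have "\<dots> \<approx> Add ?s Zero" by (intro fc_add fc_refl fcong.add_neg)
  also have "\<dots> \<approx> Add Zero ?s" by (rule fcong.add_comm)
  also have "\<dots> \<approx> ?s" by (rule fcong.add_zero)
  finally show ?thesis by (rule fc_sym)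
qed

lemma smul_zero_r: "Smul c Zero \<approx> Zero"
proof -
  have "Smul c Zero \<approx> Smul c (Smul 0 Zero)" by (intro fc_smul fc_sym[OF smul_zero_l])
  also have "\<dots> \<approx> Smul (c*0) Zero" by (rule fc_sym, rule fcong.smul_smul)
  also have "\<dots> \<approx> Zero" using smul_zero_l by simp
  finally show ?thesis .
qed

lemma mul_zero_l: "Mul Zero y \<approx> Zero"
proof -
  have "Mul Zero y \<approx> Mul (Smul 0 Zero) y" by (intro fc_mul fc_sym[OF smul_zero_l] fc_refl)
  also have "\<dots> \<approx> Smul 0 (Mul Zero y)" by (rule fcong.smul_mul_left)
  also have "\<dots> \<approx> Zero" by (rule smul_zero_l)
  finally show ?thesis .
qed

lemma mul_zero_r: "Mul y Zero \<approx> Zero"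
proof -
  have "Mul y Zero \<approx> Mul y (Smul 0 Zero)" by (intro fc_mul fc_sym[OF smul_zero_l] fc_refl)
  also have "\<dots> \<approx> Smul 0 (Mul y Zero)" by (rule fcong.smul_mul_right)
  also have "\<dots> \<approx> Zero" by (rule smul_zero_l)
  finally show ?thesis .
qed

lemma add_zero_r: "Add x Zero \<approx> x"
  by (rule fc_trans[OF fcong.add_comm fcong.add_zero])

lemma add_swap4: "Add (Add a b) (Add c d) \<approx> Add (Add a c) (Add b d)"
proof -
  have "Add (Add a b) (Add c d) \<approx> Add a (Add b (Add c d))" by (rule fcong.add_assoc)
  also have "\<dots> \<approx> Add a (Add (Add b c) d)" by (intro fc_add fc_refl fc_sym[OF fcong.add_assoc])
  also have "\<dots> \<approx> Add a (Add (Add c b) d)" by (intro fc_add fc_refl fcong.add_comm)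
  also have "\<dots> \<approx> Add a (Add c (Add b d))" by (intro fc_add fc_refl fcong.add_assoc)
  also have "\<dots> \<approx> Add (Add a c) (Add b d)" by (rule fc_sym, rule fcong.add_assoc)
  finally show ?thesis .
qed

definition lsum :: "('w \<Rightarrow> ('a,'b) fterm) \<Rightarrow> 'w list \<Rightarrow> ('a,'b) fterm" where
  "lsum f xs = foldr (\<lambda>w acc. Add (f w) acc) xs Zero"

lemma lsum_simps[simp]: "lsum f [] = Zero" "lsum f (x#xs) = Add (f x) (lsum f xs)"
  by (simp_all add: lsum_def)

lemma lsum_map: "lsum f (map g xs) = lsum (\<lambda>x. f (g x)) xs"
  by (induction xs) auto

lemma lsum_remove: "x \<in> set xs \<Longrightarrow> lsum f xs \<approx> Add (f x) (lsum f (remove1 x xs))"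
proof (induction xs)
  case (Cons y ys)
  show ?case
  proof (cases "x = y")
    case False
    then have "x \<in> set ys" using Cons by auto
    then have "lsum f (y#ys) \<approx> Add (f y) (Add (f x) (lsum f (remove1 x ys)))"
      using Cons by (auto intro: fc_add)
    also have "\<dots> \<approx> Add (Add (f y) (f x)) (lsum f (remove1 x ys))" by (rule fc_sym, rule fcong.add_assoc)
    also have "\<dots> \<approx> Add (Add (f x) (f y)) (lsum f (remove1 x ys))" by (intro fc_add fcong.add_comm fc_refl)
    also have "\<dots> \<approx> Add (f x) (Add (f y) (lsum f (remove1 x ys)))" by (rule fcong.add_assoc)
    finally show ?thesis using False by simp
  qed simp
qed simp

lemma lsum_perm: "distinct xs \<Longrightarrow> distinct ys \<Longrightarrow> set xs = set ys \<Longrightarrow> lsum f xs \<approx> lsum f ys"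
proof (induction xs arbitrary: ys)
  case Nil then show ?case by simp
next
  case (Cons x xs)
  then have x: "x \<in> set ys" by auto
  have "lsum f (remove1 x ys) \<approx> lsum f xs"
    by (rule fc_sym, rule Cons.IH) (use Cons in \<open>auto simp: set_remove1_eq\<close>)
  then have "lsum f (x#xs) \<approx> Add (f x) (lsum f (remove1 x ys))" by (simp add: fc_add fc_sym)
  also have "\<dots> \<approx> lsum f ys" by (rule fc_sym, rule lsum_remove[OF x])
  finally show ?case .
qed

definition tsum :: "('w \<Rightarrow> ('a,'b) fterm) \<Rightarrow> 'w set \<Rightarrow> ('a,'b) fterm" where
  "tsum f S = lsum f (SOME xs. set xs = S \<and> distinct xs)"

lemma tsum_eq: "set xs = S \<Longrightarrow> distinct xs \<Longrightarrow> tsum f S \<approx> lsum f xs"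
proof -
  assume a: "set xs = S" "distinct xs"
  then have "\<exists>xs. set xs = S \<and> distinct xs" by blast
  then have "set (SOME xs. set xs = S \<and> distinct xs) = S \<and> distinct (SOME xs. set xs = S \<and> distinct xs)"
    by (rule someI_ex)
  then show ?thesis unfolding tsum_def using a by (intro lsum_perm) auto
qed

lemma tsum_def2: "finite S \<Longrightarrow> tsum f S = lsum f (SOME xs. set xs = S \<and> distinct xs)" by (simp add: tsum_def)

lemma tsum_empty[simp]: "tsum f {} = Zero"
proof -
  have h: "(SOME xs. set xs = {} \<and> distinct xs) = []" by (rule some_equality) auto
  show ?thesis unfolding tsum_def h by simp
qed

lemma tsum_insert: "finite S \<Longrightarrow> x \<notin> S \<Longrightarrow> tsum f (insert x S) \<approx> Add (f x) (tsum f S)"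
proof -
  assume "finite S" "x \<notin> S"
  then obtain xs where xs: "set xs = S" "distinct xs" using finite_distinct_list by blast
  have "tsum f (insert x S) \<approx> lsum f (x#xs)" using xs \<open>x \<notin> S\<close> by (intro tsum_eq) auto
  also have "\<dots> \<approx> Add (f x) (tsum f S)" using tsum_eq[OF xs, of f] by (simp add: fc_add fc_sym)
  finally show ?thesis .
qed

lemma tsum_cong: "finite S \<Longrightarrow> (\<And>w. w \<in> S \<Longrightarrow> f w \<approx> g w) \<Longrightarrow> tsum f S \<approx> tsum g S"
proof (induction S rule: finite_induct)
  case (insert x F)
  have "tsum f (insert x F) \<approx> Add (f x) (tsum f F)" by (rule tsum_insert) fact+
  also have "\<dots> \<approx> Add (g x) (tsum g F)" using insert by (auto intro: fc_add)
  also have "\<dots> \<approx> tsum g (insert x F)" by (rule fc_sym, rule tsum_insert) fact+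
  finally show ?case .
qed simp

lemma tsum_add: "finite S \<Longrightarrow> tsum (\<lambda>w. Add (f w) (g w)) S \<approx> Add (tsum f S) (tsum g S)"
proof (induction S rule: finite_induct)
  case empty then show ?case using fc_sym[OF fcong.add_zero[of sA sB Zero]] by simp
next
  case (insert x F)
  have "tsum (\<lambda>w. Add (f w) (g w)) (insert x F) \<approx> Add (Add (f x) (g x)) (tsum (\<lambda>w. Add (f w) (g w)) F)"
    by (rule tsum_insert) fact+
  also have "\<dots> \<approx> Add (Add (f x) (g x)) (Add (tsum f F) (tsum g F))" using insert by (auto intro: fc_add)
  also have "\<dots> \<approx> Add (Add (f x) (tsum f F)) (Add (g x) (tsum g F))" by (rule add_swap4)
  also have "\<dots> \<approx> Add (tsum f (insert x F)) (tsum g (insert x F))"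
    using insert by (intro fc_add fc_sym[OF tsum_insert]) auto
  finally show ?case .
qed

lemma tsum_smul: "finite S \<Longrightarrow> tsum (\<lambda>w. Smul c (f w)) S \<approx> Smul c (tsum f S)"
proof (induction S rule: finite_induct)
  case empty then show ?case using fc_sym[OF smul_zero_r] by simp
next
  case (insert x F)
  have "tsum (\<lambda>w. Smul c (f w)) (insert x F) \<approx> Add (Smul c (f x)) (tsum (\<lambda>w. Smul c (f w)) F)"
    by (rule tsum_insert) fact+
  also have "\<dots> \<approx> Add (Smul c (f x)) (Smul c (tsum f F))" using insert by (auto intro: fc_add)
  also have "\<dots> \<approx> Smul c (Add (f x) (tsum f F))" by (rule fc_sym, rule fcong.smul_add)
  also have "\<dots> \<approx> Smul c (tsum f (insert x F))" using insert by (intro fc_smul fc_sym[OF tsum_insert]) auto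
  finally show ?case .
qed

lemma tsum_mul_r: "finite S \<Longrightarrow> Mul (tsum f S) y \<approx> tsum (\<lambda>w. Mul (f w) y) S"
proof (induction S rule: finite_induct)
  case empty then show ?case using mul_zero_l by simp
next
  case (insert x F)
  have "Mul (tsum f (insert x F)) y \<approx> Mul (Add (f x) (tsum f F)) y" by (intro fc_mul fc_refl, rule tsum_insert) (use insert in auto)
  also have "\<dots> \<approx> Add (Mul (f x) y) (Mul (tsum f F) y)" by (rule fcong.distrib_right)
  also have "\<dots> \<approx> Add (Mul (f x) y) (tsum (\<lambda>w. Mul (f w) y) F)" using insert by (auto intro: fc_add)
  also have "\<dots> \<approx> tsum (\<lambda>w. Mul (f w) y) (insert x F)" by (rule fc_sym, rule tsum_insert) (use insert in auto)
  finally show ?case .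
qed

lemma tsum_mul_l: "finite S \<Longrightarrow> Mul y (tsum f S) \<approx> tsum (\<lambda>w. Mul y (f w)) S"
proof (induction S rule: finite_induct)
  case empty then show ?case using mul_zero_r by simp
next
  case (insert x F)
  have "Mul y (tsum f (insert x F)) \<approx> Mul y (Add (f x) (tsum f F))" by (intro fc_mul fc_refl, rule tsum_insert) (use insert in auto)
  also have "\<dots> \<approx> Add (Mul y (f x)) (Mul y (tsum f F))" by (rule fcong.distrib_left)
  also have "\<dots> \<approx> Add (Mul y (f x)) (tsum (\<lambda>w. Mul y (f w)) F)" using insert by (auto intro: fc_add)
  also have "\<dots> \<approx> tsum (\<lambda>w. Mul y (f w)) (insert x F)" by (rule fc_sym, rule tsum_insert) (use insert in auto)
  finally show ?case .
qed

lemma tsum_union: "finite A \<Longrightarrow> finite B \<Longrightarrow> A \<inter> B = {} \<Longrightarrow> tsum f (A \<union> B) \<approx> Add (tsum f A) (tsum f B)"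
proof (induction A rule: finite_induct)
  case empty then show ?case using fc_sym[OF fcong.add_zero] by simp
next
  case (insert x F)
  have "tsum f (insert x F \<union> B) = tsum f (insert x (F \<union> B))" by simp
  also have "\<dots> \<approx> Add (f x) (tsum f (F \<union> B))" using insert by (intro tsum_insert) auto
  also have "\<dots> \<approx> Add (f x) (Add (tsum f F) (tsum f B))" using insert by (intro fc_add) auto
  also have "\<dots> \<approx> Add (Add (f x) (tsum f F)) (tsum f B)" by (rule fc_sym, rule fcong.add_assoc)
  also have "\<dots> \<approx> Add (tsum f (insert x F)) (tsum f B)" using insert by (intro fc_add fc_sym[OF tsum_insert]) auto
  finally show ?case .
qed

lemma tsum_zero: "finite S \<Longrightarrow> (\<And>w. w \<in> S \<Longrightarrow> f w \<approx> Zero) \<Longrightarrow> tsum f S \<approx> Zero"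
proof -
  assume a: "finite S" "\<And>w. w \<in> S \<Longrightarrow> f w \<approx> Zero"
  have "\<And>w. w \<in> S \<Longrightarrow> f w \<approx> Smul 0 Zero" using fc_trans[OF a(2) fc_sym[OF smul_zero_l]] by blast
  then have "tsum f S \<approx> tsum (\<lambda>w. Smul 0 Zero) S" using a(1) by (intro tsum_cong) auto
  also have "\<dots> \<approx> Smul 0 (tsum (\<lambda>w. Zero) S)" by (rule tsum_smul) fact
  also have "\<dots> \<approx> Zero" by (rule smul_zero_l)
  finally show ?thesis .
qed

lemma tsum_mono: "finite T \<Longrightarrow> S \<subseteq> T \<Longrightarrow> (\<And>w. w \<in> T - S \<Longrightarrow> f w \<approx> Zero) \<Longrightarrow> tsum f T \<approx> tsum f S"
proof -
  assume a: "finite T" "S \<subseteq> T" "\<And>w. w \<in> T - S \<Longrightarrow> f w \<approx> Zero"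
  then have "T = S \<union> (T - S)" by auto
  then have "tsum f T = tsum f (S \<union> (T - S))" by simp
  also have "\<dots> \<approx> Add (tsum f S) (tsum f (T - S))" using a by (intro tsum_union) (auto intro: finite_subset)
  also have "\<dots> \<approx> Add (tsum f S) Zero" using a by (intro fc_add fc_refl tsum_zero) auto
  also have "\<dots> \<approx> tsum f S" by (rule add_zero_r)
  finally show ?thesis .
qed

lemma tsum_single: "tsum f {x} \<approx> f x"
  using tsum_insert[of "{}" x f] add_zero_r fc_trans by simp

lemma tsum_reindex: "finite S \<Longrightarrow> inj_on g S \<Longrightarrow> tsum f (g ` S) \<approx> tsum (\<lambda>x. f (g x)) S"
proof -
  assume "finite S" "inj_on g S"
  then obtain xs where xs: "set xs = S" "distinct xs" using finite_distinct_list by blast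
  have "tsum f (g ` S) \<approx> lsum f (map g xs)" using xs \<open>inj_on g S\<close> by (intro tsum_eq) (auto simp: distinct_map)
  also have "\<dots> = lsum (\<lambda>x. f (g x)) xs" by (rule lsum_map)
  also have "\<dots> \<approx> tsum (\<lambda>x. f (g x)) S" by (rule fc_sym, rule tsum_eq) (use xs in auto)
  finally show ?thesis .
qed

lemma dstar_lsum: "dstar \<phi> (lsum f xs) = lsum (\<lambda>w. dstar \<phi> (f w)) xs"
  by (induction xs) auto

lemma dstar_tsum: "dstar \<phi> (tsum f S) = tsum (\<lambda>w. dstar \<phi> (f w)) S"
  by (simp add: tsum_def dstar_lsum)

end


locale fp = fpb sA sB + vs: vector_space sA
  for sA :: "complex \<Rightarrow> 'a::{ring,monoid_mult} \<Rightarrow> 'a" and sB :: "complex \<Rightarrow> 'b::{ring,monoid_mult} \<Rightarrow> 'b" +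
  fixes \<phi> :: "'a \<Rightarrow> 'b"
  assumes algA: "cplx_alg sA" and algB: "cplx_alg sB" and iso: "anti_iso sA sB \<phi>" and nt: "(1::'a) \<noteq> 0"
begin

lemma sA_mult_l: "sA c (x*y) = sA c x * y" using algA unfolding cplx_alg_def by blast
lemma sA_mult_r: "sA c (x*y) = x * sA c y" using algA unfolding cplx_alg_def by blast
lemma sB_mult_l: "sB c (x*y) = sB c x * y" using algB unfolding cplx_alg_def by blast
lemma sB_mult_r: "sB c (x*y) = x * sB c y" using algB unfolding cplx_alg_def by blast

lemma phi_bij: "bij \<phi>" using iso by (simp add: anti_iso_def)
lemma phi_add: "\<phi> (x + y) = \<phi> x + \<phi> y" using iso by (simp add: anti_iso_def)
lemma phi_smul: "\<phi> (sA c x) = sB (cnj c) (\<phi> x)" using iso by (simp add: anti_iso_def)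
lemma phi_mul: "\<phi> (x * y) = \<phi> y * \<phi> x" using iso by (simp add: anti_iso_def)
lemma phi_inv[simp]: "\<phi> (inv \<phi> b) = b" using phi_bij by (simp add: bij_is_surj surj_f_inv_f)
lemma inv_phi[simp]: "inv \<phi> (\<phi> a) = a" using phi_bij by (simp add: bij_is_inj inv_f_f)
lemma phi_one: "\<phi> 1 = 1"
proof -
  have "\<phi> 1 * y = y" for y using phi_mul[of "inv \<phi> y" 1] by simp
  then show ?thesis by (metis mult_1_right)
qed
lemma phi_inj: "\<phi> x = \<phi> y \<Longrightarrow> x = y" by (metis inv_phi)
lemma invphi_one: "inv \<phi> 1 = 1" by (metis inv_phi phi_one)
lemma invphi_add: "inv \<phi> (x + y) = inv \<phi> x + inv \<phi> y"
  by (rule phi_inj) (simp add: phi_add)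
lemma invphi_mul: "inv \<phi> (x * y) = inv \<phi> y * inv \<phi> x"
  by (rule phi_inj) (simp add: phi_mul)
lemma invphi_smul: "inv \<phi> (sB c x) = sA (cnj c) (inv \<phi> x)"
  by (rule phi_inj) (simp add: phi_smul)

definition "H = vs.extend_basis {1}"
definition "rep a = vs.representation H a"

lemma indep_H: "vs.independent H"
  unfolding H_def by (rule vs.independent_extend_basis) (use nt in \<open>simp add: vs.independent_insert\<close>)
lemma span_H: "vs.span H = UNIV"
  unfolding H_def by (rule vs.span_extend_basis) (use nt in \<open>simp add: vs.independent_insert\<close>)
lemma one_H: "1 \<in> H"
  using vs.extend_basis_superset[of "{1}"] nt unfolding H_def by (auto simp: vs.independent_insert)

lemma rep_add: "rep (a + b) h = rep a h + rep b h"
  unfolding rep_def using vs.representation_add[OF indep_H, of b a] span_H by simp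
lemma rep_smul: "rep (sA c a) h = c * rep a h"
  unfolding rep_def using vs.representation_scale[OF indep_H, of a c] span_H by simp
lemma rep_zero: "rep 0 h = 0"
  unfolding rep_def by (simp add: vs.representation_zero)
lemma rep_sum: "rep (sum f F) h = (\<Sum>i\<in>F. rep (f i) h)"
  unfolding rep_def using vs.representation_sum[OF indep_H, of F f] span_H by simp
lemma rep_basis: "b \<in> H \<Longrightarrow> rep b g = (if g = b then 1 else 0)"
  unfolding rep_def using vs.representation_basis[OF indep_H] by simp
lemma rep_fin: "finite {h. rep a h \<noteq> 0}"
  unfolding rep_def by (rule vs.finite_representation)
lemma rep_in: "rep a h \<noteq> 0 \<Longrightarrow> h \<in> H"
  unfolding rep_def by (rule vs.representation_ne_zero)
lemma rep_expand: "finite F \<Longrightarrow> {h. rep a h \<noteq> 0} \<subseteq> F \<Longrightarrow> (\<Sum>h\<in>F. sA (rep a h) h) = a"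
proof -
  assume F: "finite F" "{h. rep a h \<noteq> 0} \<subseteq> F"
  have "(\<Sum>h\<in>F. sA (rep a h) h) = (\<Sum>h | rep a h \<noteq> 0. sA (rep a h) h)"
    by (rule sum.mono_neutral_right) (use F in auto)
  also have "\<dots> = a" unfolding rep_def
    by (rule vs.sum_nonzero_representation_eq[OF indep_H]) (simp add: span_H)
  finally show ?thesis .
qed

definition tw :: "bool \<Rightarrow> complex \<Rightarrow> complex" where "tw t c = (if t then cnj c else c)"
definition pr :: "bool \<Rightarrow> 'a \<Rightarrow> 'a \<Rightarrow> 'a" where "pr t a b = (if t then b * a else a * b)"
definition co :: "bool \<Rightarrow> 'a \<Rightarrow> 'a \<Rightarrow> complex" where "co t c h = tw t (rep c h)"

lemma tw_add: "tw t (x + y) = tw t x + tw t y" by (simp add: tw_def)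
lemma tw_mult: "tw t (x * y) = tw t x * tw t y" by (simp add: tw_def)
lemma tw_sum: "tw t (sum f F) = (\<Sum>i\<in>F. tw t (f i))" by (simp add: tw_def)
lemma tw_0[simp]: "tw t 0 = 0" and tw_1[simp]: "tw t 1 = 1" by (simp_all add: tw_def)
lemma tw_tw[simp]: "tw t (tw t c) = c" by (simp add: tw_def)

lemma pr_add: "pr t a (x + y) = pr t a x + pr t a y" by (simp add: pr_def algebra_simps)
lemma pr_add_l: "pr t (a + a') x = pr t a x + pr t a' x" by (simp add: pr_def algebra_simps)
lemma pr_zero: "pr t a 0 = 0" by (simp add: pr_def)
lemma pr_smul: "pr t a (sA k x) = sA k (pr t a x)" by (simp add: pr_def sA_mult_l[symmetric] sA_mult_r[symmetric])
lemma pr_smul_l: "pr t (sA k a) x = sA k (pr t a x)" by (simp add: pr_def sA_mult_l[symmetric] sA_mult_r[symmetric])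
lemma pr_sum: "pr t a (sum f F) = (\<Sum>i\<in>F. pr t a (f i))"
  by (induction F rule: infinite_finite_induct) (simp_all add: pr_zero pr_add)
lemma pr_assoc: "pr t a (pr t a' b) = pr t (pr t a a') b" by (simp add: pr_def mult.assoc)
lemma pr_one[simp]: "pr t 1 b = b" "pr t a 1 = a" by (simp_all add: pr_def)

lemma co_add: "co t (x + y) h = co t x h + co t y h" by (simp add: co_def rep_add tw_add)
lemma co_smul: "co t (sA k x) h = tw t k * co t x h" by (simp add: co_def rep_smul tw_mult)
lemma co_basis: "b \<in> H \<Longrightarrow> co t b g = (if g = b then 1 else 0)" by (simp add: co_def rep_basis)
lemma co_fin: "finite {h. co t a h \<noteq> 0}" using rep_fin[of a] by (simp add: co_def tw_def)
lemma co_nz: "co t a h \<noteq> 0 \<longleftrightarrow> rep a h \<noteq> 0" by (simp add: co_def tw_def)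

lemma co_lin:
  assumes F: "finite F" "{h. rep c h \<noteq> 0} \<subseteq> F"
  shows "(\<Sum>h\<in>F. co t c h * co t (pr t a h) g) = co t (pr t a c) g"
proof -
  have "pr t a c = pr t a (\<Sum>h\<in>F. sA (rep c h) h)" using rep_expand[OF F] by simp
  also have "\<dots> = (\<Sum>h\<in>F. sA (rep c h) (pr t a h))" by (simp add: pr_sum pr_smul)
  finally have "co t (pr t a c) g = tw t (\<Sum>h\<in>F. rep c h * rep (pr t a h) g)"
    by (simp add: co_def rep_sum rep_smul)
  also have "\<dots> = (\<Sum>h\<in>F. co t c h * co t (pr t a h) g)"
    by (simp add: tw_sum tw_mult co_def)
  finally show ?thesis by simp
qed

end


context fp begin

fun good :: "('a \<times> bool) list \<Rightarrow> bool" where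
  "good [] = True"
| "good [(e,t)] = (e \<in> H \<and> e \<noteq> 1)"
| "good ((e,t)#(f,s)#w) = (e \<in> H \<and> e \<noteq> 1 \<and> t \<noteq> s \<and> good ((f,s)#w))"

definition starts :: "bool \<Rightarrow> ('a \<times> bool) list \<Rightarrow> bool" where "starts t w = (w \<noteq> [] \<and> snd (hd w) = t)"
definition base :: "bool \<Rightarrow> ('a \<times> bool) list \<Rightarrow> 'a" where "base t w = (if starts t w then fst (hd w) else 1)"
definition rest :: "bool \<Rightarrow> ('a \<times> bool) list \<Rightarrow> ('a \<times> bool) list" where "rest t w = (if starts t w then tl w else w)"
definition consh :: "bool \<Rightarrow> 'a \<Rightarrow> ('a \<times> bool) list \<Rightarrow> ('a \<times> bool) list" where
  "consh t h r = (if h = 1 then r else (h,t)#r)"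

lemma starts_simps[simp]: "starts t [] = False" "starts t ((e,s)#w) = (s = t)" by (simp_all add: starts_def)

lemma good_Cons: "good ((e,t)#w) \<longleftrightarrow> e \<in> H \<and> e \<noteq> 1 \<and> \<not> starts t w \<and> good w"
  by (cases w) auto

declare good.simps(2,3)[simp del]

lemma good_rest: "good w \<Longrightarrow> good (rest t w) \<and> \<not> starts t (rest t w)"
  by (cases w) (auto simp: rest_def good_Cons)
lemma base_H: "good w \<Longrightarrow> base t w \<in> H"
  by (cases w) (auto simp: base_def good_Cons one_H)
lemma w_consh: "good w \<Longrightarrow> consh t (base t w) (rest t w) = w"
  by (cases w) (auto simp: base_def rest_def consh_def good_Cons)
lemma consh_good: "good r \<Longrightarrow> \<not> starts t r \<Longrightarrow> h \<in> H \<Longrightarrow> good (consh t h r)"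
  by (simp add: consh_def good_Cons)
lemma base_consh: "\<not> starts t r \<Longrightarrow> base t (consh t h r) = h"
  by (simp add: consh_def base_def)
lemma rest_consh: "\<not> starts t r \<Longrightarrow> rest t (consh t h r) = r"
  by (simp add: consh_def rest_def)
lemma consh_inj: "consh t h r = consh t h' r \<longleftrightarrow> h = h'"
  by (auto simp: consh_def dest: arg_cong[of _ _ length])
lemma length_consh: "length (consh t h r) \<le> Suc (length r)"
  by (simp add: consh_def)
lemma length_rest: "starts t w \<Longrightarrow> Suc (length (rest t w)) = length w"
  by (cases w) (auto simp: rest_def)
lemma length_rest2: "length (rest t w) \<le> length w"
  by (cases w) (auto simp: rest_def)

definition core :: "bool \<Rightarrow> 'a \<Rightarrow> ('a \<times> bool) list \<Rightarrow> ('a \<times> bool) list \<Rightarrow> complex" where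
  "core t c r z = (if z = r then co t c 1 else
     if z \<noteq> [] \<and> tl z = r \<and> snd (hd z) = t \<and> fst (hd z) \<noteq> 1 then co t c (fst (hd z)) else 0)"

lemma core_consh: "core t c r (consh t h r) = co t c h"
  by (auto simp: core_def consh_def dest: arg_cong[of _ _ length])

lemma core_out: "(\<And>h. z \<noteq> consh t h r) \<Longrightarrow> core t c r z = 0"
proof -
  assume a: "\<And>h. z \<noteq> consh t h r"
  have "z \<noteq> r" using a[of 1] by (simp add: consh_def)
  moreover have n2: "\<not> (z \<noteq> [] \<and> tl z = r \<and> snd (hd z) = t \<and> fst (hd z) \<noteq> 1)"
  proof
    assume b: "z \<noteq> [] \<and> tl z = r \<and> snd (hd z) = t \<and> fst (hd z) \<noteq> 1"
    then have "z = consh t (fst (hd z)) r" by (cases z) (auto simp: consh_def)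
    with a show False by blast
  qed
  ultimately show ?thesis by (simp only: core_def if_not_P if_False)
qed

lemma core_cases: "core t c r z \<noteq> 0 \<Longrightarrow> \<exists>h. z = consh t h r \<and> rep c h \<noteq> 0"
  by (metis core_consh core_out co_nz)

lemma core_add: "core t (c + c') r z = core t c r z + core t c' r z"
  by (simp add: core_def co_add)
lemma core_smul: "core t (sA k c) r z = tw t k * core t c r z"
  by (simp add: core_def co_smul)

definition supp :: "(('a \<times> bool) list \<Rightarrow> complex) \<Rightarrow> ('a \<times> bool) list set" where "supp m = {w. m w \<noteq> 0}"
definition okM :: "(('a \<times> bool) list \<Rightarrow> complex) \<Rightarrow> bool" where "okM m = (finite (supp m) \<and> (\<forall>w\<in>supp m. good w))"
definition dl :: "('a \<times> bool) list \<Rightarrow> ('a \<times> bool) list \<Rightarrow> complex" where "dl w = (\<lambda>z. if z = w then 1 else 0)"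
definition app :: "(('a \<times> bool) list \<Rightarrow> ('a \<times> bool) list \<Rightarrow> complex) \<Rightarrow> (('a \<times> bool) list \<Rightarrow> complex) \<Rightarrow> ('a \<times> bool) list \<Rightarrow> complex" where
  "app f m = (\<lambda>z. \<Sum>w\<in>supp m. m w * f w z)"

lemma supp_dl[simp]: "supp (dl w) = {w}" by (auto simp: supp_def dl_def)
lemma okM_dl: "good w \<Longrightarrow> okM (dl w)" by (simp add: okM_def)
lemma okM_good: "okM m \<Longrightarrow> m w \<noteq> 0 \<Longrightarrow> good w" by (simp add: okM_def supp_def)
lemma okM_fin: "okM m \<Longrightarrow> finite (supp m)" by (simp add: okM_def)

lemma app_sub: "finite S \<Longrightarrow> supp m \<subseteq> S \<Longrightarrow> app f m z = (\<Sum>w\<in>S. m w * f w z)"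
  unfolding app_def by (rule sum.mono_neutral_left) (auto simp: supp_def)

lemma app_dl[simp]: "app f (dl w) = f w" unfolding app_def supp_dl by (simp add: dl_def)

lemma app_cong: "(\<And>w. w \<in> supp m \<Longrightarrow> f w = g w) \<Longrightarrow> app f m = app g m"
  by (simp add: app_def)

lemma app_id: "finite (supp m) \<Longrightarrow> app dl m = m"
proof
  fix z assume f: "finite (supp m)"
  show "app dl m z = m z"
  proof (cases "z \<in> supp m")
    case True
    have "app dl m z = (\<Sum>w\<in>supp m. if w = z then m w else 0)"
      unfolding app_def by (rule sum.cong) (auto simp: dl_def)
    then show ?thesis using True f by (simp add: sum.delta)
  next
    case False
    then have "m z = 0" by (simp add: supp_def)
    moreover have "app dl m z = 0" unfolding app_def dl_def using False by (intro sum.neutral) auto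
    ultimately show ?thesis by simp
  qed
qed

lemma supp_app: "supp (app f m) \<subseteq> (\<Union>w\<in>supp m. supp (f w))"
proof (rule subsetI, rule ccontr)
  fix z assume a: "z \<in> supp (app f m)" "z \<notin> (\<Union>w\<in>supp m. supp (f w))"
  then have "\<forall>w\<in>supp m. f w z = 0" by (auto simp: supp_def)
  then have "app f m z = 0" by (simp add: app_def)
  with a show False by (simp add: supp_def)
qed

lemma okM_app: "okM m \<Longrightarrow> (\<And>w. good w \<Longrightarrow> okM (f w)) \<Longrightarrow> okM (app f m)"
proof -
  assume a: "okM m" "\<And>w. good w \<Longrightarrow> okM (f w)"
  have "finite (\<Union>w\<in>supp m. supp (f w))" using a by (auto simp: okM_def)
  moreover have "\<forall>z\<in>(\<Union>w\<in>supp m. supp (f w)). good z" using a by (auto simp: okM_def)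
  ultimately show ?thesis using supp_app[of f m] unfolding okM_def by (auto intro: finite_subset)
qed

lemma supp_add: "supp (\<lambda>z. m1 z + m2 z) \<subseteq> supp m1 \<union> supp m2" by (auto simp: supp_def)
lemma supp_smul: "supp (\<lambda>z. c * m z) \<subseteq> supp m" by (auto simp: supp_def)

lemma okM_add: "okM m1 \<Longrightarrow> okM m2 \<Longrightarrow> okM (\<lambda>z. m1 z + m2 z)"
  using supp_add[of m1 m2] unfolding okM_def by (auto intro: finite_subset)
lemma okM_smul: "okM m \<Longrightarrow> okM (\<lambda>z. c * m z)"
  using supp_smul[of c m] unfolding okM_def by (auto intro: finite_subset)
lemma okM_zero: "okM (\<lambda>z. 0)" by (simp add: okM_def supp_def)

lemma app_add_m: "finite (supp m1) \<Longrightarrow> finite (supp m2) \<Longrightarrow> app f (\<lambda>z. m1 z + m2 z) = (\<lambda>z. app f m1 z + app f m2 z)"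
proof
  fix z assume f: "finite (supp m1)" "finite (supp m2)"
  let ?S = "supp m1 \<union> supp m2"
  have "app f (\<lambda>z. m1 z + m2 z) z = (\<Sum>w\<in>?S. (m1 w + m2 w) * f w z)"
    using f supp_add by (intro app_sub) auto
  also have "\<dots> = (\<Sum>w\<in>?S. m1 w * f w z) + (\<Sum>w\<in>?S. m2 w * f w z)" by (simp add: algebra_simps sum.distrib)
  also have "\<dots> = app f m1 z + app f m2 z" using f app_sub[of ?S m1 f z] app_sub[of ?S m2 f z] by auto
  finally show "app f (\<lambda>z. m1 z + m2 z) z = app f m1 z + app f m2 z" .
qed

lemma app_smul_m: "finite (supp m) \<Longrightarrow> app f (\<lambda>z. c * m z) = (\<lambda>z. c * app f m z)"
proof
  fix z assume f: "finite (supp m)"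
  have "app f (\<lambda>z. c * m z) z = (\<Sum>w\<in>supp m. (c * m w) * f w z)"
    using f supp_smul by (intro app_sub) auto
  also have "\<dots> = c * app f m z" by (simp add: app_def sum_distrib_left algebra_simps)
  finally show "app f (\<lambda>z. c * m z) z = c * app f m z" .
qed

lemma app_add_f: "app (\<lambda>w z. f w z + g w z) m = (\<lambda>z. app f m z + app g m z)"
  by (simp add: app_def algebra_simps sum.distrib)
lemma app_smul_f: "app (\<lambda>w z. c * f w z) m = (\<lambda>z. c * app f m z)"
  by (simp add: app_def sum_distrib_left algebra_simps)
lemma app_zero_f: "app (\<lambda>w z. 0) m = (\<lambda>z. 0)"
  by (simp add: app_def)

lemma app_comp: "okM m \<Longrightarrow> (\<And>w. good w \<Longrightarrow> okM (f w)) \<Longrightarrow> app g (app f m) = app (\<lambda>w. app g (f w)) m"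
proof
  fix z assume a: "okM m" "\<And>w. good w \<Longrightarrow> okM (f w)"
  let ?S = "\<Union>w\<in>supp m. supp (f w)"
  have fS: "finite ?S" using a by (auto simp: okM_def)
  have "app g (app f m) z = (\<Sum>w'\<in>?S. app f m w' * g w' z)" using fS supp_app by (intro app_sub) auto
  also have "\<dots> = (\<Sum>w'\<in>?S. \<Sum>w\<in>supp m. m w * f w w' * g w' z)" by (simp add: app_def sum_distrib_right)
  also have "\<dots> = (\<Sum>w\<in>supp m. \<Sum>w'\<in>?S. m w * f w w' * g w' z)" by (rule sum.swap)
  also have "\<dots> = (\<Sum>w\<in>supp m. m w * app g (f w) z)"
  proof (rule sum.cong[OF HOL.refl])
    fix w assume w: "w \<in> supp m"
    have "app g (f w) z = (\<Sum>w'\<in>?S. f w w' * g w' z)" using fS w by (intro app_sub) auto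
    then show "(\<Sum>w'\<in>?S. m w * f w w' * g w' z) = m w * app g (f w) z" by (simp add: sum_distrib_left mult.assoc)
  qed
  also have "\<dots> = app (\<lambda>w. app g (f w)) m z" by (simp add: app_def)
  finally show "app g (app f m) z = app (\<lambda>w. app g (f w)) m z" .
qed

lemma supp_sum: "supp (\<lambda>z. \<Sum>h\<in>F. k h * g h z) \<subseteq> (\<Union>h\<in>F. supp (g h))"
proof (rule subsetI, rule ccontr)
  fix z assume a: "z \<in> supp (\<lambda>z. \<Sum>h\<in>F. k h * g h z)" "z \<notin> (\<Union>h\<in>F. supp (g h))"
  then have "\<forall>h\<in>F. g h z = 0" by (auto simp: supp_def)
  then have "(\<Sum>h\<in>F. k h * g h z) = 0" by simp
  with a show False by (simp add: supp_def)
qed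

lemma app_sum_m: "finite F \<Longrightarrow> (\<And>h. h \<in> F \<Longrightarrow> finite (supp (g h))) \<Longrightarrow>
    app f (\<lambda>z. \<Sum>h\<in>F. k h * g h z) = (\<lambda>z. \<Sum>h\<in>F. k h * app f (g h) z)"
proof (induction F rule: finite_induct)
  case empty then show ?case by (simp add: app_def supp_def)
next
  case (insert x F)
  have fin: "finite (supp (\<lambda>z. \<Sum>h\<in>F. k h * g h z))"
    using insert by (intro finite_subset[OF supp_sum]) auto
  have "app f (\<lambda>z. \<Sum>h\<in>insert x F. k h * g h z) = app f (\<lambda>z. k x * g x z + (\<Sum>h\<in>F. k h * g h z))"
    using insert by simp
  also have "\<dots> = (\<lambda>z. app f (\<lambda>z. k x * g x z) z + app f (\<lambda>z. \<Sum>h\<in>F. k h * g h z) z)"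
    using insert fin by (intro app_add_m finite_subset[OF supp_smul]) auto
  also have "\<dots> = (\<lambda>z. \<Sum>h\<in>insert x F. k h * app f (g h) z)"
    using insert by (simp add: app_smul_m)
  finally show ?case .
qed

lemma core_sum: "finite F \<Longrightarrow> {h. rep c h \<noteq> 0} \<subseteq> F \<Longrightarrow>
   core t c r = (\<lambda>z. \<Sum>h\<in>F. co t c h * dl (consh t h r) z)"
proof
  fix z assume F: "finite F" "{h. rep c h \<noteq> 0} \<subseteq> F"
  show "core t c r z = (\<Sum>h\<in>F. co t c h * dl (consh t h r) z)"
  proof (cases "\<exists>h0. z = consh t h0 r")
    case True
    then obtain h0 where z: "z = consh t h0 r" by blast
    have "(\<Sum>h\<in>F. co t c h * dl (consh t h r) z) = (\<Sum>h\<in>F. if h = h0 then co t c h else 0)"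
      by (rule sum.cong) (auto simp: z dl_def consh_inj)
    also have "\<dots> = co t c h0" using F co_nz[of t c h0] by (auto simp: sum.delta')
    finally show ?thesis by (simp add: z core_consh)
  next
    case False
    then have "core t c r z = 0" by (intro core_out) auto
    moreover have "(\<Sum>h\<in>F. co t c h * dl (consh t h r) z) = 0" using False by (intro sum.neutral) (auto simp: dl_def)
    ultimately show ?thesis by simp
  qed
qed

lemma okM_core: "good r \<Longrightarrow> \<not> starts t r \<Longrightarrow> okM (core t c r)"
proof -
  assume a: "good r" "\<not> starts t r"
  have "supp (core t c r) \<subseteq> (\<lambda>h. consh t h r) ` {h. rep c h \<noteq> 0}"
    by (auto simp: supp_def dest!: core_cases)
  moreover have "\<forall>z\<in>(\<lambda>h. consh t h r) ` {h. rep c h \<noteq> 0}. good z"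
    using a by (auto intro!: consh_good rep_in)
  ultimately show ?thesis unfolding okM_def using rep_fin[of c] by (auto intro: finite_subset)
qed

lemma core_basis: "b \<in> H \<Longrightarrow> core t b r = dl (consh t b r)"
proof
  fix z assume b: "b \<in> H"
  show "core t b r z = dl (consh t b r) z"
  proof (cases "\<exists>h0. z = consh t h0 r")
    case True
    then obtain h0 where z: "z = consh t h0 r" by blast
    show ?thesis by (simp add: z core_consh co_basis[OF b] dl_def consh_inj)
  next
    case False
    then show ?thesis by (subst core_out) (auto simp: dl_def)
  qed
qed

definition actw :: "bool \<Rightarrow> 'a \<Rightarrow> ('a \<times> bool) list \<Rightarrow> ('a \<times> bool) list \<Rightarrow> complex" where
  "actw t a w = core t (pr t a (base t w)) (rest t w)"
definition act :: "bool \<Rightarrow> 'a \<Rightarrow> (('a \<times> bool) list \<Rightarrow> complex) \<Rightarrow> ('a \<times> bool) list \<Rightarrow> complex" where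
  "act t a = app (actw t a)"

lemma okM_actw: "good w \<Longrightarrow> okM (actw t a w)"
  unfolding actw_def using good_rest by (intro okM_core) auto
lemma okM_act: "okM m \<Longrightarrow> okM (act t a m)"
  unfolding act_def by (intro okM_app okM_actw)

lemma actw_hom: "good w \<Longrightarrow> act t a (actw t a' w) = actw t (pr t a a') w"
proof
  fix z assume w: "good w"
  let ?b = "base t w" and ?r = "rest t w"
  let ?c = "pr t a' ?b"
  define F where "F = {h. rep ?c h \<noteq> 0}"
  have F: "finite F" "{h. rep ?c h \<noteq> 0} \<subseteq> F" by (auto simp: F_def rep_fin)
  have r: "good ?r" "\<not> starts t ?r" using good_rest[OF w] by auto
  have "act t a (actw t a' w) = act t a (\<lambda>z. \<Sum>h\<in>F. co t ?c h * dl (consh t h ?r) z)"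
    unfolding actw_def using core_sum[OF F] by simp
  also have "\<dots> = (\<lambda>z. \<Sum>h\<in>F. co t ?c h * act t a (dl (consh t h ?r)) z)"
    unfolding act_def using F by (intro app_sum_m) auto
  also have "\<dots> = (\<lambda>z. \<Sum>h\<in>F. co t ?c h * core t (pr t a h) ?r z)"
    by (simp add: act_def actw_def base_consh[OF r(2)] rest_consh[OF r(2)])
  finally have eq: "act t a (actw t a' w) z = (\<Sum>h\<in>F. co t ?c h * core t (pr t a h) ?r z)" by simp
  show "act t a (actw t a' w) z = actw t (pr t a a') w z"
  proof (cases "\<exists>g. z = consh t g ?r")
    case True
    then obtain g where z: "z = consh t g ?r" by blast
    show ?thesis unfolding eq by (simp add: z core_consh actw_def co_lin[OF F] pr_assoc)
  next
    case False
    have "\<And>h. core t (pr t a h) ?r z = 0" using False by (intro core_out) auto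
    moreover have "actw t (pr t a a') w z = 0" unfolding actw_def using False by (intro core_out) auto
    ultimately show ?thesis unfolding eq by simp
  qed
qed

lemma act_hom: "okM m \<Longrightarrow> act t a (act t a' m) = act t (pr t a a') m"
proof -
  assume m: "okM m"
  have "act t a (act t a' m) = app (\<lambda>w. act t a (actw t a' w)) m"
    unfolding act_def[of t a'] using m by (simp add: act_def app_comp okM_actw)
  also have "\<dots> = app (actw t (pr t a a')) m"
    using m by (intro app_cong) (simp add: actw_hom okM_def)
  finally show ?thesis by (simp add: act_def)
qed

lemma actw_one: "good w \<Longrightarrow> actw t 1 w = dl w"
  by (simp add: actw_def core_basis base_H w_consh)
lemma act_one: "okM m \<Longrightarrow> act t 1 m = m"
proof -
  assume m: "okM m"
  have "act t 1 m = app dl m" unfolding act_def using m by (intro app_cong) (simp add: actw_one okM_def)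
  then show ?thesis using m app_id by (simp add: okM_def)
qed
lemma act_add: "act t (a + a') m = (\<lambda>z. act t a m z + act t a' m z)"
  unfolding act_def app_add_f[symmetric]
  by (rule arg_cong[where f="\<lambda>f. app f m"]) (simp add: fun_eq_iff actw_def pr_add_l core_add)
lemma act_smul: "act t (sA k a) m = (\<lambda>z. tw t k * act t a m z)"
  unfolding act_def app_smul_f[symmetric]
  by (rule arg_cong[where f="\<lambda>f. app f m"]) (simp add: fun_eq_iff actw_def pr_smul_l core_smul)

end


context fp begin

primrec eval :: "('a,'b) fterm \<Rightarrow> (('a \<times> bool) list \<Rightarrow> complex) \<Rightarrow> ('a \<times> bool) list \<Rightarrow> complex" where
  "eval (GenA a) = act False a"
| "eval (GenB b) = act True (inv \<phi> b)"
| "eval One = (\<lambda>m. m)"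
| "eval Zero = (\<lambda>m z. 0)"
| "eval (Add x y) = (\<lambda>m z. eval x m z + eval y m z)"
| "eval (Mul x y) = (\<lambda>m. eval x (eval y m))"
| "eval (Smul c x) = (\<lambda>m z. c * eval x m z)"

lemma eval_props: "okM m \<Longrightarrow> okM (eval x m) \<and> eval x m = app (\<lambda>w. eval x (dl w)) m"
proof (induction x arbitrary: m)
  case (GenA a) then show ?case using okM_act[of m False a] by (simp add: act_def)
next
  case (GenB b) then show ?case using okM_act[of m True "inv \<phi> b"] by (simp add: act_def)
next
  case One then show ?case by (simp add: app_id okM_def)
next
  case Zero then show ?case by (simp add: okM_zero app_zero_f)
next
  case (Add x y)
  have o: "okM (eval x m)" "okM (eval y m)" using Add by blast+
  have e: "app (\<lambda>w. eval x (dl w)) m = eval x m" "app (\<lambda>w. eval y (dl w)) m = eval y m" using Add by metis+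
  show ?case using okM_add[OF o] by (simp add: app_add_f e)
next
  case (Smul c x)
  have o: "okM (eval x m)" using Smul by blast
  have e: "app (\<lambda>w. eval x (dl w)) m = eval x m" using Smul by metis
  show ?case using okM_smul[OF o] by (simp add: app_smul_f e)
next
  case (Mul x y)
  have oy: "okM (eval y m)" using Mul by blast
  have "eval x (eval y m) = app (\<lambda>w'. eval x (dl w')) (app (\<lambda>w. eval y (dl w)) m)"
    using Mul.IH(1)[OF oy] Mul.IH(2)[OF Mul.prems] by simp
  also have "\<dots> = app (\<lambda>w. app (\<lambda>w'. eval x (dl w')) (eval y (dl w))) m"
    using Mul.prems Mul.IH(2)[OF okM_dl] by (intro app_comp) auto
  also have "\<dots> = app (\<lambda>w. eval x (eval y (dl w))) m"
  proof (rule app_cong)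
    fix w assume "w \<in> supp m"
    then have "good w" using Mul.prems by (simp add: okM_def)
    then have "okM (eval y (dl w))" using Mul.IH(2)[OF okM_dl] by blast
    then show "app (\<lambda>w'. eval x (dl w')) (eval y (dl w)) = eval x (eval y (dl w))"
      using Mul.IH(1) by metis
  qed
  finally have eq: "eval x (eval y m) = app (\<lambda>w. eval x (eval y (dl w))) m" .
  have ok: "okM (eval x (eval y m))" using Mul.IH(1)[OF oy] by blast
  show ?case unfolding eval.simps by (rule conjI[OF ok eq])
qed

lemma okM_eval: "okM m \<Longrightarrow> okM (eval x m)" using eval_props by blast
lemma eval_app: "okM m \<Longrightarrow> eval x m = app (\<lambda>w. eval x (dl w)) m" using eval_props by blast

lemma eval_add: "okM m1 \<Longrightarrow> okM m2 \<Longrightarrow> eval x (\<lambda>z. m1 z + m2 z) = (\<lambda>z. eval x m1 z + eval x m2 z)"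
proof -
  assume a: "okM m1" "okM m2"
  then have "eval x (\<lambda>z. m1 z + m2 z) = app (\<lambda>w. eval x (dl w)) (\<lambda>z. m1 z + m2 z)"
    by (intro eval_app okM_add)
  also have "\<dots> = (\<lambda>z. eval x m1 z + eval x m2 z)"
    using a by (simp add: app_add_m okM_def eval_app[of m1] eval_app[of m2])
  finally show ?thesis .
qed

lemma eval_smul: "okM m \<Longrightarrow> eval x (\<lambda>z. c * m z) = (\<lambda>z. c * eval x m z)"
proof -
  assume a: "okM m"
  then have "eval x (\<lambda>z. c * m z) = app (\<lambda>w. eval x (dl w)) (\<lambda>z. c * m z)"
    by (intro eval_app okM_smul)
  also have "\<dots> = (\<lambda>z. c * eval x m z)"
    using a by (simp add: app_smul_m okM_def eval_app[of m])
  finally show ?thesis .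
qed

lemma sound: "fcong sA sB x y \<Longrightarrow> okM m \<Longrightarrow> eval x m = eval y m"
proof (induction arbitrary: m rule: fcong.induct)
  case (cong_mul x x' y y')
  then show ?case using okM_eval[of m y] by simp
next
  case (distrib_left x y z)
  then show ?case by (simp add: eval_add okM_eval)
next
  case (smul_mul_right x c y)
  then show ?case by (simp add: eval_smul okM_eval)
next
  case (genA_add a a') then show ?case by (simp add: act_add)
next
  case (genA_smul c a) then show ?case by (simp add: act_smul tw_def)
next
  case (genA_mul a a') then show ?case by (simp add: act_hom pr_def)
next
  case genA_one then show ?case by (simp add: act_one)
next
  case (genB_add b b') then show ?case by (simp add: act_add invphi_add)
next
  case (genB_smul c b) then show ?case by (simp add: act_smul tw_def invphi_smul)
next
  case (genB_mul b b') then show ?case by (simp add: act_hom pr_def invphi_mul)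
next
  case genB_one then show ?case by (simp add: act_one invphi_one)
qed (simp_all add: fun_eq_iff algebra_simps)

end


context fp begin

definition gen :: "bool \<Rightarrow> 'a \<Rightarrow> ('a,'b) fterm" where "gen t e = (if t then GenB (\<phi> e) else GenA e)"

fun wt :: "('a \<times> bool) list \<Rightarrow> ('a,'b) fterm" where
  "wt [] = One"
| "wt ((e,t)#w) = Mul (gen t e) (wt w)"

definition bk :: "(('a \<times> bool) list \<Rightarrow> complex) \<Rightarrow> ('a,'b) fterm" where
  "bk m = tsum (\<lambda>w. Smul (m w) (wt w)) (supp m)"

lemma eval_gen: "eval (gen t e) = act t e" by (simp add: gen_def)

lemma gen_pr: "gen t (pr t a a') \<approx> Mul (gen t a) (gen t a')"
  by (cases t) (simp_all add: gen_def pr_def phi_mul fcong.genA_mul fcong.genB_mul)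
lemma gen_smul: "gen t (sA k a) \<approx> Smul (tw t k) (gen t a)"
  by (cases t) (simp_all add: gen_def tw_def phi_smul fcong.genA_smul fcong.genB_smul)
lemma gen_add: "gen t (a + a') \<approx> Add (gen t a) (gen t a')"
  by (cases t) (simp_all add: gen_def phi_add fcong.genA_add fcong.genB_add)
lemma gen_one: "gen t 1 \<approx> One"
  by (cases t) (simp_all add: gen_def phi_one fcong.genA_one fcong.genB_one)
lemma gen_zero: "gen t 0 \<approx> Zero"
proof -
  have "gen t 0 = gen t (sA 0 0)" by simp
  also have "\<dots> \<approx> Smul (tw t 0) (gen t 0)" by (rule gen_smul)
  also have "\<dots> \<approx> Zero" using smul_zero_l by simp
  finally show ?thesis .
qed

lemma gen_sum: "finite F \<Longrightarrow> gen t (\<Sum>h\<in>F. g h) \<approx> tsum (\<lambda>h. gen t (g h)) F"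
proof (induction F rule: finite_induct)
  case empty then show ?case by (simp add: gen_zero)
next
  case (insert x F)
  have "gen t (\<Sum>h\<in>insert x F. g h) = gen t (g x + (\<Sum>h\<in>F. g h))" using insert by simp
  also have "\<dots> \<approx> Add (gen t (g x)) (gen t (\<Sum>h\<in>F. g h))" by (rule gen_add)
  also have "\<dots> \<approx> Add (gen t (g x)) (tsum (\<lambda>h. gen t (g h)) F)" using insert by (intro fc_add fc_refl)
  also have "\<dots> \<approx> tsum (\<lambda>h. gen t (g h)) (insert x F)" by (rule fc_sym, rule tsum_insert) (use insert in auto)
  finally show ?case .
qed

lemma gen_expand: "finite F \<Longrightarrow> {h. rep c h \<noteq> 0} \<subseteq> F \<Longrightarrow> gen t c \<approx> tsum (\<lambda>h. Smul (co t c h) (gen t h)) F"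
proof -
  assume F: "finite F" "{h. rep c h \<noteq> 0} \<subseteq> F"
  have "gen t c = gen t (\<Sum>h\<in>F. sA (rep c h) h)" using rep_expand[OF F] by simp
  also have "\<dots> \<approx> tsum (\<lambda>h. gen t (sA (rep c h) h)) F" by (rule gen_sum) fact
  also have "\<dots> \<approx> tsum (\<lambda>h. Smul (co t c h) (gen t h)) F" by (rule tsum_cong) (auto simp: co_def intro: F gen_smul)
  finally show ?thesis .
qed

lemma wt_consh: "Mul (gen t h) (wt r) \<approx> wt (consh t h r)"
proof (cases "h = 1")
  case True
  have "Mul (gen t h) (wt r) \<approx> Mul One (wt r)" using True gen_one[of t] by (simp add: fc_mul)
  also have "\<dots> \<approx> wt r" by (rule fcong.one_mul)
  finally show ?thesis using True by (simp add: consh_def)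
qed (simp add: consh_def)

lemma wt_split: "good w \<Longrightarrow> wt w \<approx> Mul (gen t (base t w)) (wt (rest t w))"
  using wt_consh[of t "base t w" "rest t w"] w_consh[of w t] by (simp add: fc_sym)

lemma back_sub: "finite S \<Longrightarrow> supp m \<subseteq> S \<Longrightarrow> bk m \<approx> tsum (\<lambda>w. Smul (m w) (wt w)) S"
  unfolding bk_def by (rule fc_sym, rule tsum_mono) (auto simp: supp_def smul_zero_l)

lemma back_zero: "bk (\<lambda>z. 0) = Zero" by (simp add: bk_def supp_def)

lemma back_add: "finite (supp m1) \<Longrightarrow> finite (supp m2) \<Longrightarrow> bk (\<lambda>z. m1 z + m2 z) \<approx> Add (bk m1) (bk m2)"
proof -
  assume f: "finite (supp m1)" "finite (supp m2)"
  let ?S = "supp m1 \<union> supp m2"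
  have fS: "finite ?S" using f by simp
  have "bk (\<lambda>z. m1 z + m2 z) \<approx> tsum (\<lambda>w. Smul (m1 w + m2 w) (wt w)) ?S"
    using fS supp_add by (intro back_sub) auto
  also have "\<dots> \<approx> tsum (\<lambda>w. Add (Smul (m1 w) (wt w)) (Smul (m2 w) (wt w))) ?S"
    using fS by (intro tsum_cong fcong.add_smul)
  also have "\<dots> \<approx> Add (tsum (\<lambda>w. Smul (m1 w) (wt w)) ?S) (tsum (\<lambda>w. Smul (m2 w) (wt w)) ?S)"
    using fS by (rule tsum_add)
  also have "\<dots> \<approx> Add (bk m1) (bk m2)"
    using fS by (intro fc_add fc_sym[OF back_sub]) auto
  finally show ?thesis .
qed

lemma back_smul: "finite (supp m) \<Longrightarrow> bk (\<lambda>z. c * m z) \<approx> Smul c (bk m)"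
proof -
  assume f: "finite (supp m)"
  have "bk (\<lambda>z. c * m z) \<approx> tsum (\<lambda>w. Smul (c * m w) (wt w)) (supp m)"
    using f supp_smul by (intro back_sub) auto
  also have "\<dots> \<approx> tsum (\<lambda>w. Smul c (Smul (m w) (wt w))) (supp m)"
    using f by (intro tsum_cong fcong.smul_smul)
  also have "\<dots> \<approx> Smul c (bk m)" unfolding bk_def using f by (rule tsum_smul)
  finally show ?thesis .
qed

lemma back_dl: "bk (dl w) \<approx> wt w"
proof -
  have "bk (dl w) = tsum (\<lambda>v. Smul (dl w v) (wt v)) {w}" by (simp add: bk_def)
  also have "\<dots> \<approx> Smul (dl w w) (wt w)" by (rule tsum_single)
  also have "\<dots> \<approx> wt w" by (simp add: dl_def fcong.smul_one)
  finally show ?thesis .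
qed

lemma back_sum: "finite F \<Longrightarrow> (\<And>h. h \<in> F \<Longrightarrow> finite (supp (g h))) \<Longrightarrow>
   bk (\<lambda>z. \<Sum>h\<in>F. k h * g h z) \<approx> tsum (\<lambda>h. Smul (k h) (bk (g h))) F"
proof (induction F rule: finite_induct)
  case empty then show ?case by (simp add: back_zero)
next
  case (insert x F)
  have fin: "finite (supp (\<lambda>z. \<Sum>h\<in>F. k h * g h z))"
    using insert by (intro finite_subset[OF supp_sum]) auto
  have fx: "finite (supp (\<lambda>z. k x * g x z))" using insert by (intro finite_subset[OF supp_smul]) auto
  have "bk (\<lambda>z. \<Sum>h\<in>insert x F. k h * g h z) = bk (\<lambda>z. k x * g x z + (\<Sum>h\<in>F. k h * g h z))"
    using insert by simp
  also have "\<dots> \<approx> Add (bk (\<lambda>z. k x * g x z)) (bk (\<lambda>z. \<Sum>h\<in>F. k h * g h z))"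
    by (rule back_add[OF fx fin])
  also have "\<dots> \<approx> Add (Smul (k x) (bk (g x))) (tsum (\<lambda>h. Smul (k h) (bk (g h))) F)"
    using insert by (intro fc_add back_smul) auto
  also have "\<dots> \<approx> tsum (\<lambda>h. Smul (k h) (bk (g h))) (insert x F)"
    by (rule fc_sym, rule tsum_insert) (use insert in auto)
  finally show ?case .
qed

lemma back_app: "okM m \<Longrightarrow> (\<And>w. good w \<Longrightarrow> finite (supp (f w))) \<Longrightarrow>
   bk (app f m) \<approx> tsum (\<lambda>w. Smul (m w) (bk (f w))) (supp m)"
  unfolding app_def by (rule back_sum) (auto simp: okM_def)

lemma back_actw: "good w \<Longrightarrow> bk (actw t a w) \<approx> Mul (gen t a) (wt w)"
proof -
  assume w: "good w"
  let ?b = "base t w" and ?r = "rest t w"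
  let ?c = "pr t a ?b"
  define F where "F = {h. rep ?c h \<noteq> 0}"
  have F: "finite F" "{h. rep ?c h \<noteq> 0} \<subseteq> F" by (auto simp: F_def rep_fin)
  have "bk (actw t a w) = bk (\<lambda>z. \<Sum>h\<in>F. co t ?c h * dl (consh t h ?r) z)"
    unfolding actw_def using core_sum[OF F] by simp
  also have "\<dots> \<approx> tsum (\<lambda>h. Smul (co t ?c h) (bk (dl (consh t h ?r)))) F"
    using F by (intro back_sum) auto
  also have "\<dots> \<approx> tsum (\<lambda>h. Smul (co t ?c h) (Mul (gen t h) (wt ?r))) F"
    using F by (intro tsum_cong fc_smul fc_trans[OF back_dl fc_sym[OF wt_consh]])
  also have "\<dots> \<approx> tsum (\<lambda>h. Mul (Smul (co t ?c h) (gen t h)) (wt ?r)) F"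
    using F by (intro tsum_cong fc_sym[OF fcong.smul_mul_left])
  also have "\<dots> \<approx> Mul (tsum (\<lambda>h. Smul (co t ?c h) (gen t h)) F) (wt ?r)"
    by (rule fc_sym, rule tsum_mul_r) fact
  also have "\<dots> \<approx> Mul (gen t ?c) (wt ?r)"
    by (intro fc_mul fc_refl fc_sym[OF gen_expand] F)
  also have "\<dots> \<approx> Mul (Mul (gen t a) (gen t ?b)) (wt ?r)"
    by (intro fc_mul fc_refl gen_pr)
  also have "\<dots> \<approx> Mul (gen t a) (Mul (gen t ?b) (wt ?r))" by (rule fcong.mul_assoc)
  also have "\<dots> \<approx> Mul (gen t a) (wt w)" by (intro fc_mul fc_refl fc_sym[OF wt_split] w)
  finally show ?thesis .
qed

lemma back_act: "okM m \<Longrightarrow> bk (act t a m) \<approx> Mul (gen t a) (bk m)"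
proof -
  assume m: "okM m"
  have f: "finite (supp m)" using m by (simp add: okM_def)
  have "bk (act t a m) \<approx> tsum (\<lambda>w. Smul (m w) (bk (actw t a w))) (supp m)"
    unfolding act_def using m okM_actw by (intro back_app) (auto simp: okM_def)
  also have "\<dots> \<approx> tsum (\<lambda>w. Smul (m w) (Mul (gen t a) (wt w))) (supp m)"
    using f m by (intro tsum_cong fc_smul back_actw) (auto simp: okM_def)
  also have "\<dots> \<approx> tsum (\<lambda>w. Mul (gen t a) (Smul (m w) (wt w))) (supp m)"
    using f by (intro tsum_cong fc_sym[OF fcong.smul_mul_right])
  also have "\<dots> \<approx> Mul (gen t a) (bk m)" unfolding bk_def by (rule fc_sym, rule tsum_mul_l) fact
  finally show ?thesis .
qed

lemma complete: "okM m \<Longrightarrow> bk (eval x m) \<approx> Mul x (bk m)"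
proof (induction x arbitrary: m)
  case (GenA a)
  then show ?case using back_act[of m False a] by (simp add: gen_def)
next
  case (GenB b)
  then show ?case using back_act[of m True "inv \<phi> b"] by (simp add: gen_def)
next
  case One then show ?case by (simp add: fc_sym[OF fcong.one_mul])
next
  case Zero then show ?case by (simp add: back_zero fc_sym[OF mul_zero_l])
next
  case (Add x y)
  have "bk (eval (Add x y) m) \<approx> Add (bk (eval x m)) (bk (eval y m))"
    using okM_eval[OF Add.prems] by (simp add: back_add okM_def)
  also have "\<dots> \<approx> Add (Mul x (bk m)) (Mul y (bk m))" using Add by (intro fc_add)
  also have "\<dots> \<approx> Mul (Add x y) (bk m)" by (rule fc_sym, rule fcong.distrib_right)
  finally show ?case .
next
  case (Smul c x)
  have "bk (eval (Smul c x) m) \<approx> Smul c (bk (eval x m))"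
    using okM_eval[OF Smul.prems] by (simp add: back_smul okM_def)
  also have "\<dots> \<approx> Smul c (Mul x (bk m))" using Smul by (intro fc_smul)
  also have "\<dots> \<approx> Mul (Smul c x) (bk m)" by (rule fc_sym, rule fcong.smul_mul_left)
  finally show ?case .
next
  case (Mul x y)
  have "bk (eval (Mul x y) m) \<approx> Mul x (bk (eval y m))"
    using Mul.IH(1)[OF okM_eval[OF Mul.prems]] by simp
  also have "\<dots> \<approx> Mul x (Mul y (bk m))" using Mul by (intro fc_mul fc_refl)
  also have "\<dots> \<approx> Mul (Mul x y) (bk m)" by (rule fc_sym, rule fcong.mul_assoc)
  finally show ?case .
qed

abbreviation v where "v x \<equiv> eval x (dl [])"

lemma okM_v: "okM (v x)" by (intro okM_eval okM_dl) simp

lemma x_back: "x \<approx> bk (v x)"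
proof -
  have "bk (v x) \<approx> Mul x (bk (dl []))" by (rule complete) (simp add: okM_dl)
  also have "\<dots> \<approx> Mul x One" using back_dl[of "[]"] by (intro fc_mul fc_refl) simp
  also have "\<dots> \<approx> x" by (rule fcong.mul_one)
  finally show ?thesis by (rule fc_sym)
qed

lemma scalar_of: "supp (v x) \<subseteq> {[]} \<Longrightarrow> x \<approx> Smul (v x []) One"
proof -
  assume s: "supp (v x) \<subseteq> {[]}"
  have "x \<approx> bk (v x)" by (rule x_back)
  also have "\<dots> \<approx> tsum (\<lambda>w. Smul (v x w) (wt w)) {[]}" using s by (intro back_sub) auto
  also have "\<dots> \<approx> Smul (v x []) One" using tsum_single[of "\<lambda>w. Smul (v x w) (wt w)" "[]"] by simp
  finally show ?thesis .
qed

end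


context fp begin

definition rsw :: "('a \<times> bool) list \<Rightarrow> ('a \<times> bool) list" where
  "rsw w = rev (map (\<lambda>(e,t). (e, \<not> t)) w)"
definition starM :: "(('a \<times> bool) list \<Rightarrow> complex) \<Rightarrow> ('a \<times> bool) list \<Rightarrow> complex" where
  "starM m = (\<lambda>w. cnj (m (rsw w)))"

lemma rsw_rsw[simp]: "rsw (rsw w) = w"
  by (simp add: rsw_def rev_map comp_def case_prod_beta)
lemma length_rsw[simp]: "length (rsw w) = length w" by (simp add: rsw_def)
lemma rsw_Nil[simp]: "rsw [] = []" by (simp add: rsw_def)
lemma rsw_Cons: "rsw ((e,t)#w) = rsw w @ [(e, \<not> t)]" by (simp add: rsw_def)
lemma rsw_inj: "inj rsw" by (metis injI rsw_rsw)
lemma last_rsw: "w \<noteq> [] \<Longrightarrow> last (rsw w) = (fst (hd w), \<not> snd (hd w))"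
  by (cases w) (auto simp: rsw_def)

lemma good_single: "good [(e,t)] \<longleftrightarrow> e \<in> H \<and> e \<noteq> 1" by (simp add: good_Cons)

lemma good_append: "good (u @ w) \<longleftrightarrow> good u \<and> good w \<and> (u \<noteq> [] \<longrightarrow> w \<noteq> [] \<longrightarrow> snd (last u) \<noteq> snd (hd w))"
proof (induction u)
  case Nil then show ?case by simp
next
  case (Cons x u)
  obtain e t where x: "x = (e,t)" by (cases x)
  show ?case
  proof (cases u)
    case Nil
    then show ?thesis using x by (cases w) (auto simp: good_Cons starts_def)
  next
    case (Cons y u')
    then show ?thesis using x Cons.IH by (auto simp: good_Cons starts_def)
  qed
qed

lemma good_rsw: "good w \<Longrightarrow> good (rsw w)"
proof (induction w)
  case (Cons x w)
  obtain e t where x: "x = (e,t)" by (cases x)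
  have g: "e \<in> H" "e \<noteq> 1" "\<not> starts t w" "good w" using Cons.prems x by (auto simp: good_Cons)
  show ?case unfolding x rsw_Cons good_append using Cons.IH g
    by (cases w) (auto simp: good_single last_rsw starts_def)
qed simp

lemma supp_starM: "supp (starM m) = rsw ` supp m"
  by (auto simp: supp_def starM_def image_iff) (metis rsw_rsw)

lemma okM_starM: "okM m \<Longrightarrow> okM (starM m)"
  by (auto simp: okM_def supp_starM intro: good_rsw)

lemma dstar_gen: "dstar \<phi> (gen t e) = gen (\<not> t) e" by (simp add: gen_def)

lemma wt_append: "wt (u @ w) \<approx> Mul (wt u) (wt w)"
proof (induction u)
  case Nil then show ?case by (simp add: fc_sym[OF fcong.one_mul])
next
  case (Cons x u)
  obtain e t where x: "x = (e,t)" by (cases x)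
  have "wt ((x # u) @ w) = Mul (gen t e) (wt (u @ w))" by (simp add: x)
  also have "\<dots> \<approx> Mul (gen t e) (Mul (wt u) (wt w))" using Cons by (intro fc_mul fc_refl)
  also have "\<dots> \<approx> Mul (wt (x # u)) (wt w)" by (simp add: x fc_sym[OF fcong.mul_assoc])
  finally show ?case .
qed

lemma dstar_wt: "dstar \<phi> (wt w) \<approx> wt (rsw w)"
proof (induction w)
  case (Cons x w)
  obtain e t where x: "x = (e,t)" by (cases x)
  have "dstar \<phi> (wt (x # w)) = Mul (dstar \<phi> (wt w)) (gen (\<not> t) e)" by (simp add: x dstar_gen)
  also have "\<dots> \<approx> Mul (wt (rsw w)) (Mul (gen (\<not> t) e) One)"
    using Cons by (intro fc_mul fc_sym[OF fcong.mul_one])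
  also have "\<dots> \<approx> wt (rsw (x # w))" using wt_append[of "rsw w" "[(e, \<not> t)]"]
    by (simp add: x rsw_Cons fc_sym)
  finally show ?case .
qed simp

lemma dstar_cong: "fcong sA sB x y \<Longrightarrow> fcong sA sB (dstar \<phi> x) (dstar \<phi> y)"
proof (induction rule: fcong.induct)
  case (refl x) then show ?case by simp
next
  case (sym x y) from sym(2) show ?case by (rule fc_sym)
next
  case (trans x y z) from trans.IH show ?case by (rule fc_trans)
next
  case (cong_add x x' y y') then show ?case by (simp add: fc_add)
next
  case (cong_mul x x' y y') then show ?case by (simp add: fc_mul)
next
  case (cong_smul x x' c) then show ?case by (simp add: fc_smul)
next
  case (add_assoc x y z) then show ?case by (simp add: fcong.add_assoc)
next
  case (add_comm x y) then show ?case by (simp add: fcong.add_comm)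
next
  case (add_zero x) then show ?case by (simp add: fcong.add_zero)
next
  case (add_neg x) then show ?case using fcong.add_neg[of sA sB "dstar \<phi> x"] by simp
next
  case (smul_add c x y) then show ?case by (simp add: fcong.smul_add)
next
  case (add_smul c d x) then show ?case using fcong.add_smul[of sA sB "cnj c" "cnj d"] by simp
next
  case (smul_smul c d x) then show ?case using fcong.smul_smul[of sA sB "cnj c" "cnj d"] by simp
next
  case (smul_one x) then show ?case using fcong.smul_one by simp
next
  case (mul_assoc x y z) then show ?case by (simp add: fc_sym[OF fcong.mul_assoc])
next
  case (one_mul x) then show ?case by (simp add: fcong.mul_one)
next
  case (mul_one x) then show ?case by (simp add: fcong.one_mul)
next
  case (distrib_left x y z) then show ?case by (simp add: fcong.distrib_right)
next
  case (distrib_right x y z) then show ?case by (simp add: fcong.distrib_left)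
next
  case (smul_mul_left c x y) then show ?case by (simp add: fcong.smul_mul_right)
next
  case (smul_mul_right x c y) then show ?case by (simp add: fcong.smul_mul_left)
next
  case (genA_add a a') then show ?case by (simp add: phi_add fcong.genB_add)
next
  case (genA_smul c a) then show ?case by (simp add: phi_smul fcong.genB_smul)
next
  case (genA_mul a a') then show ?case by (simp add: phi_mul fcong.genB_mul)
next
  case genA_one then show ?case by (simp add: phi_one fcong.genB_one)
next
  case (genB_add b b') then show ?case by (simp add: invphi_add fcong.genA_add)
next
  case (genB_smul c b) then show ?case by (simp add: invphi_smul fcong.genA_smul)
next
  case (genB_mul b b') then show ?case by (simp add: invphi_mul fcong.genA_mul)
next
  case genB_one then show ?case by (simp add: invphi_one fcong.genA_one)
qed

lemma dstar_bk: "okM m \<Longrightarrow> dstar \<phi> (bk m) \<approx> bk (starM m)"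
proof -
  assume m: "okM m"
  have f: "finite (supp m)" using m by (simp add: okM_def)
  have "dstar \<phi> (bk m) = tsum (\<lambda>w. Smul (cnj (m w)) (dstar \<phi> (wt w))) (supp m)"
    by (simp add: bk_def dstar_tsum)
  also have "\<dots> \<approx> tsum (\<lambda>w. Smul (cnj (m w)) (wt (rsw w))) (supp m)"
    using f by (intro tsum_cong fc_smul dstar_wt)
  also have "\<dots> = tsum (\<lambda>w. Smul (starM m (rsw w)) (wt (rsw w))) (supp m)"
    by (simp add: starM_def)
  also have "\<dots> \<approx> bk (starM m)" unfolding bk_def supp_starM
    by (rule fc_sym, rule tsum_reindex[OF f inj_on_subset[OF rsw_inj subset_UNIV]])
  finally show ?thesis .
qed

lemma eval_lsum: "eval (lsum f xs) m z = sum_list (map (\<lambda>w. eval (f w) m z) xs)"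
  by (induction xs) auto

lemma eval_tsum: "finite S \<Longrightarrow> eval (tsum f S) m z = (\<Sum>w\<in>S. eval (f w) m z)"
proof -
  assume "finite S"
  then have "\<exists>xs. set xs = S \<and> distinct xs" using finite_distinct_list by blast
  then have xs: "set (SOME xs. set xs = S \<and> distinct xs) = S \<and> distinct (SOME xs. set xs = S \<and> distinct xs)"
    by (rule someI_ex)
  show ?thesis unfolding tsum_def eval_lsum using xs by (simp add: sum_list_distinct_conv_sum_set)
qed

lemma eval_bk: "okM m1 \<Longrightarrow> eval (bk m1) m z = (\<Sum>u\<in>supp m1. m1 u * eval (wt u) m z)"
  unfolding bk_def by (simp add: eval_tsum okM_def)

lemma eval_wt_Cons: "eval (wt ((e,t)#u)) m = act t e (eval (wt u) m)"
  by (simp add: eval_gen)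

lemma okM_wt: "okM m \<Longrightarrow> okM (eval (wt u) m)" by (rule okM_eval)

lemma sum_nz: "(\<Sum>w\<in>S. f w) \<noteq> (0::complex) \<Longrightarrow> \<exists>w\<in>S. f w \<noteq> 0"
proof (rule ccontr)
  assume a: "(\<Sum>w\<in>S. f w) \<noteq> 0" "\<not> (\<exists>w\<in>S. f w \<noteq> 0)"
  then have "\<forall>w\<in>S. f w = 0" by blast
  then have "(\<Sum>w\<in>S. f w) = 0" by simp
  with a show False by simp
qed

lemma actw_len: "good w \<Longrightarrow> actw t a w z \<noteq> 0 \<Longrightarrow> length z \<le> Suc (length w)"
proof -
  assume "actw t a w z \<noteq> 0"
  then obtain h where "z = consh t h (rest t w)" unfolding actw_def using core_cases by blast
  then show ?thesis using length_rest2[of t w] length_consh[of t h "rest t w"] by simp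
qed

lemma actw_len2: "good w \<Longrightarrow> starts t w \<Longrightarrow> actw t a w z \<noteq> 0 \<Longrightarrow> length z \<le> length w"
proof -
  assume "starts t w" "actw t a w z \<noteq> 0"
  then obtain h where "z = consh t h (rest t w)" unfolding actw_def using core_cases by blast
  then show ?thesis using length_rest[OF \<open>starts t w\<close>] length_consh[of t h "rest t w"] by simp
qed

lemma act_len: "okM m \<Longrightarrow> (\<And>z. m z \<noteq> 0 \<Longrightarrow> length z \<le> n) \<Longrightarrow> act t a m z \<noteq> 0 \<Longrightarrow> length z \<le> Suc n"
proof -
  assume m: "okM m" "\<And>z. m z \<noteq> 0 \<Longrightarrow> length z \<le> n" "act t a m z \<noteq> 0"
  then obtain w where w: "w \<in> supp m" "m w * actw t a w z \<noteq> 0"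
    unfolding act_def app_def using sum_nz by blast
  then have "good w" "length w \<le> n" using m by (auto simp: okM_def supp_def)
  then show ?thesis using actw_len[of w t a z] w by simp
qed

lemma wt_len: "okM m \<Longrightarrow> (\<And>z. m z \<noteq> 0 \<Longrightarrow> length z \<le> n) \<Longrightarrow> eval (wt u) m z \<noteq> 0 \<Longrightarrow> length z \<le> length u + n"
proof (induction u arbitrary: z)
  case Nil then show ?case by simp
next
  case (Cons x u)
  obtain e t where x: "x = (e,t)" by (cases x)
  have "act t e (eval (wt u) m) z \<noteq> 0" using Cons.prems x by (simp add: eval_gen)
  moreover have b: "\<And>z'. eval (wt u) m z' \<noteq> 0 \<Longrightarrow> length z' \<le> length u + n"
    using Cons.IH Cons.prems(1,2) by blast
  ultimately have "length z \<le> Suc (length u + n)" using act_len[OF okM_wt[OF Cons.prems(1)] b] by blast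
  then show ?case by simp
qed

lemma actw_cons: "good z \<Longrightarrow> \<not> starts t z \<Longrightarrow> e \<in> H \<Longrightarrow> e \<noteq> 1 \<Longrightarrow> actw t e z = dl ((e,t)#z)"
  by (simp add: actw_def base_def rest_def core_basis consh_def)

lemma wt_reduced: "good (u @ w) \<Longrightarrow> eval (wt u) (dl w) = dl (u @ w)"
proof (induction u)
  case Nil then show ?case by simp
next
  case (Cons x u)
  obtain e t where x: "x = (e,t)" by (cases x)
  have g: "good (u @ w)" "e \<in> H" "e \<noteq> 1" "\<not> starts t (u @ w)" using Cons.prems x by (auto simp: good_Cons)
  have "eval (wt (x#u)) (dl w) = act t e (dl (u @ w))" using Cons.IH[OF g(1)] x by (simp add: eval_gen)
  also have "\<dots> = dl ((e,t) # u @ w)" using g by (simp add: act_def actw_cons)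
  finally show ?case using x by simp
qed

lemma wt_merged: "good u \<Longrightarrow> good w \<Longrightarrow> u \<noteq> [] \<Longrightarrow> w \<noteq> [] \<Longrightarrow> snd (last u) = snd (hd w) \<Longrightarrow>
   eval (wt u) (dl w) z \<noteq> 0 \<Longrightarrow> length z < length u + length w"
proof -
  assume a: "good u" "good w" "u \<noteq> []" "w \<noteq> []" "snd (last u) = snd (hd w)" "eval (wt u) (dl w) z \<noteq> 0"
  obtain u' e t where u: "u = u' @ [(e,t)]" using a(3) by (metis rev_exhaust surj_pair)
  have st: "starts t w" using a(4,5) u by (cases w) (auto simp: starts_def)
  have "eval (wt u) (dl w) = eval (Mul (wt u') (wt [(e,t)])) (dl w)"
    unfolding u by (rule sound[OF wt_append okM_dl[OF a(2)]])
  also have "\<dots> = eval (wt u') (actw t e w)" by (simp add: eval_gen act_def)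
  finally have "eval (wt u') (actw t e w) z \<noteq> 0" using a(6) by simp
  moreover have b: "\<And>z'. actw t e w z' \<noteq> 0 \<Longrightarrow> length z' \<le> length w" using actw_len2[OF a(2) st] by blast
  ultimately have "length z \<le> length u' + length w" using wt_len[OF okM_actw[OF a(2)] b] by blast
  then show ?thesis using u by simp
qed

end


context fp begin

lemma degree:
  assumes m: "okM m" and ns: "\<not> supp m \<subseteq> {[]}"
  shows "\<exists>z0 n. n \<ge> 1 \<and> length z0 = 2*n \<and> (\<forall>w\<in>supp m. length w \<le> n) \<and> eval (bk (starM m)) m z0 \<noteq> 0"
proof -
  have f: "finite (supp m)" using m by (simp add: okM_def)
  obtain w1 where w1: "w1 \<in> supp m" "w1 \<noteq> []" using ns by blast
  define n where "n = Max (length ` supp m)"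
  have le: "\<forall>w\<in>supp m. length w \<le> n" unfolding n_def using f by auto
  have "n \<in> length ` supp m" unfolding n_def using f w1 by (intro Max_in) auto
  then obtain w0 where w0: "w0 \<in> supp m" "length w0 = n" by auto
  have n1: "n \<ge> 1" using le w1 by (cases w1) auto
  define z0 where "z0 = rsw w0 @ w0"
  have lz: "length z0 = 2*n" using w0 by (simp add: z0_def)
  let ?m1 = "starM m"
  have gm: "\<And>w. w \<in> supp m \<Longrightarrow> good w" using m by (simp add: okM_def)
  have E: "eval (wt u) (dl w) z0 = (if u = rsw w0 \<and> w = w0 then 1 else 0)"
    if u: "u \<in> supp ?m1" and w: "w \<in> supp m" for u w
  proof -
    obtain u' where u': "u = rsw u'" "u' \<in> supp m" using u by (auto simp: supp_starM)
    have gu: "good u" using u' gm good_rsw by blast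
    have gw: "good w" using w gm by blast
    have lu: "length u \<le> n" using u' le by simp
    have lw: "length w \<le> n" using w le by simp
    have bw: "\<And>z. dl w z \<noteq> 0 \<Longrightarrow> length z \<le> length w" by (simp add: dl_def split: if_splits)
    show ?thesis
    proof (cases "length u + length w < 2*n")
      case True
      have "eval (wt u) (dl w) z0 = 0"
      proof (rule ccontr)
        assume "eval (wt u) (dl w) z0 \<noteq> 0"
        then have "length z0 \<le> length u + length w" using wt_len[OF okM_dl[OF gw] bw] by blast
        with True lz show False by simp
      qed
      moreover have "\<not> (u = rsw w0 \<and> w = w0)" using True w0 by auto
      ultimately show ?thesis by simp
    next
      case False
      then have eq: "length u = n" "length w = n" using lu lw by auto
      then have ne: "u \<noteq> []" "w \<noteq> []" using n1 by auto
      show ?thesis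
      proof (cases "snd (last u) = snd (hd w)")
        case True
        have "eval (wt u) (dl w) z0 = 0"
        proof (rule ccontr)
          assume "eval (wt u) (dl w) z0 \<noteq> 0"
          then have "length z0 < length u + length w" using wt_merged[OF gu gw ne True] by blast
          with eq lz show False by simp
        qed
        moreover have "\<not> (u = rsw w0 \<and> w = w0)"
        proof
          assume "u = rsw w0 \<and> w = w0"
          then show False using True ne last_rsw[of w0] by auto
        qed
        ultimately show ?thesis by simp
      next
        case False
        have "good (u @ w)" using gu gw False by (simp add: good_append)
        then have "eval (wt u) (dl w) z0 = dl (u @ w) z0" by (simp add: wt_reduced)
        also have "\<dots> = (if u = rsw w0 \<and> w = w0 then 1 else 0)"
          using eq w0 by (auto simp: dl_def z0_def append_eq_append_conv)
        finally show ?thesis .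
      qed
    qed
  qed
  have om1: "okM ?m1" using m by (rule okM_starM)
  have "eval (bk ?m1) m z0 = (\<Sum>u\<in>supp ?m1. ?m1 u * eval (wt u) m z0)" by (rule eval_bk[OF om1])
  also have "\<dots> = (\<Sum>u\<in>supp ?m1. ?m1 u * (\<Sum>w\<in>supp m. m w * eval (wt u) (dl w) z0))"
    by (rule sum.cong[OF HOL.refl]) (simp add: eval_app[OF m] app_def)
  also have "\<dots> = (\<Sum>u\<in>supp ?m1. ?m1 u * (\<Sum>w\<in>supp m. if w = w0 then (if u = rsw w0 then m w else 0) else 0))"
    by (intro sum.cong HOL.refl arg_cong[where f="\<lambda>x. ?m1 _ * x"]) (auto simp: E)
  also have "\<dots> = (\<Sum>u\<in>supp ?m1. if u = rsw w0 then ?m1 u * m w0 else 0)"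
    using f w0 by (intro sum.cong HOL.refl) (simp add: sum.delta)
  also have "\<dots> = ?m1 (rsw w0) * m w0"
    using w0 by (simp add: sum.delta finite_imageI f supp_starM)
  also have "\<dots> = cnj (m w0) * m w0" by (simp add: starM_def)
  finally have "eval (bk ?m1) m z0 \<noteq> 0" using w0 by (simp add: supp_def)
  then show ?thesis using n1 lz le by blast
qed

lemma R_eq: "eval (dstar \<phi> x) (v x) = eval (bk (starM (v x))) (v x)"
proof -
  have "dstar \<phi> x \<approx> dstar \<phi> (bk (v x))" by (rule dstar_cong[OF x_back])
  also have "\<dots> \<approx> bk (starM (v x))" by (rule dstar_bk[OF okM_v])
  finally show ?thesis by (rule sound[OF _ okM_v])
qed

lemma nonscalar:
  assumes "\<not> d_scalar sA sB x"
  shows "\<exists>z0 n. n \<ge> 1 \<and> length z0 = 2*n \<and> (\<forall>w\<in>supp (v x). length w \<le> n) \<and> eval (dstar \<phi> x) (v x) z0 \<noteq> 0"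
proof -
  have "\<not> supp (v x) \<subseteq> {[]}" using assms scalar_of by (auto simp: d_scalar_def)
  then show ?thesis unfolding R_eq by (rule degree[OF okM_v])
qed

lemma proj_scalar: "d_projection sA sB \<phi> x \<Longrightarrow> d_scalar sA sB x"
proof (rule ccontr)
  assume p: "d_projection sA sB \<phi> x" and ns: "\<not> d_scalar sA sB x"
  obtain z0 n where z: "n \<ge> 1" "length z0 = 2*n" "\<forall>w\<in>supp (v x). length w \<le> n" "eval (dstar \<phi> x) (v x) z0 \<noteq> 0"
    using nonscalar[OF ns] by blast
  have "eval (dstar \<phi> x) (v x) = eval x (v x)" using p by (intro sound okM_v) (simp add: d_projection_def)
  also have "\<dots> = eval (Mul x x) (dl [])" by simp
  also have "\<dots> = v x" using p by (intro sound okM_dl) (simp_all add: d_projection_def)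
  finally have "z0 \<in> supp (v x)" using z(4) by (simp add: supp_def)
  then show False using z by auto
qed

lemma unitary_scalar: "d_unitary sA sB \<phi> x \<Longrightarrow> d_scalar sA sB x"
proof (rule ccontr)
  assume u: "d_unitary sA sB \<phi> x" and ns: "\<not> d_scalar sA sB x"
  obtain z0 n where z: "n \<ge> 1" "length z0 = 2*n" "eval (dstar \<phi> x) (v x) z0 \<noteq> 0"
    using nonscalar[OF ns] by blast
  have "eval (dstar \<phi> x) (v x) = eval (Mul (dstar \<phi> x) x) (dl [])" by simp
  also have "\<dots> = eval One (dl [])" using u by (intro sound okM_dl) (simp_all add: d_unitary_def)
  finally have "dl [] z0 \<noteq> 0" using z(3) by simp
  moreover have "z0 \<noteq> []" using z by auto
  ultimately show False by (simp add: dl_def)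
qed

lemma pi_scalar: "d_partial_isometry sA sB \<phi> x \<Longrightarrow> d_scalar sA sB x"
proof (rule ccontr)
  assume u: "d_partial_isometry sA sB \<phi> x" and ns: "\<not> d_scalar sA sB x"
  obtain z0 n where z: "n \<ge> 1" "length z0 = 2*n" "eval (dstar \<phi> x) (v x) z0 \<noteq> 0"
    using nonscalar[OF ns] by blast
  have "d_scalar sA sB (Mul (dstar \<phi> x) x)" using u by (intro proj_scalar) (simp add: d_partial_isometry_def)
  then obtain c where c: "Mul (dstar \<phi> x) x \<approx> Smul c One" by (auto simp: d_scalar_def)
  have "eval (dstar \<phi> x) (v x) = eval (Mul (dstar \<phi> x) x) (dl [])" by simp
  also have "\<dots> = eval (Smul c One) (dl [])" using c by (intro sound okM_dl) simp_all
  finally have "c * dl [] z0 \<noteq> 0" using z(3) by simp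
  moreover have "z0 \<noteq> []" using z by auto
  ultimately show False by (simp add: dl_def)
qed

end

lemma (in fpb) trivial_scalar:
  assumes "(1::'a) = 0"
  shows "d_scalar sA sB x"
proof -
  have all: "\<And>a::'a. a = 0" by (metis assms mult_1_right mult_zero_right)
  have "One \<approx> GenA 1" by (rule fc_sym, rule fcong.genA_one)
  also have "GenA (1::'a) = GenA (sA 0 1)" using all by metis
  also have "\<dots> \<approx> Smul 0 (GenA 1)" by (rule fcong.genA_smul)
  also have "\<dots> \<approx> Zero" by (rule smul_zero_l)
  finally have oz: "One \<approx> Zero" .
  have "x \<approx> Mul x One" by (rule fc_sym, rule fcong.mul_one)
  also have "\<dots> \<approx> Mul x Zero" by (intro fc_mul fc_refl oz)
  also have "\<dots> \<approx> Zero" by (rule mul_zero_r)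
  also have "\<dots> \<approx> Smul 0 One" by (rule fc_sym, rule smul_zero_l)
  finally show ?thesis by (auto simp: d_scalar_def)
qed

theorem corollary1:
  fixes sA :: "complex \<Rightarrow> 'a::{ring,monoid_mult} \<Rightarrow> 'a"
    and sB :: "complex \<Rightarrow> 'b::{ring,monoid_mult} \<Rightarrow> 'b"
    and \<phi> :: "'a \<Rightarrow> 'b"
  assumes "cplx_alg sA" and "cplx_alg sB" and "anti_iso sA sB \<phi>"
  shows "\<forall>x :: ('a, 'b) fterm.
           (d_unitary sA sB \<phi> x \<longrightarrow> d_scalar sA sB x) \<and>
           (d_projection sA sB \<phi> x \<longrightarrow> d_scalar sA sB x) \<and>
           (d_partial_isometry sA sB \<phi> x \<longrightarrow> d_scalar sA sB x)"
proof (cases "(1::'a) = 0")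
  case True
  then show ?thesis using fpb.trivial_scalar[of sA sB] by blast
next
  case False
  have vs: "vector_space sA"
    using assms(1) unfolding cplx_alg_def by unfold_locales auto
  interpret fp sA sB \<phi>
    by (intro fp.intro vs fp_axioms.intro assms False)
  show ?thesis using unitary_scalar proj_scalar pi_scalar by blast
qed


end
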